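(* Let $\alpha\in[0,1)$, let $s\geq 1$, $t\geq 1$ and $p\geq 1$ be integers, and let $n_{1}\geq n_{2}\geq\cdots\geq n_{t}\geq p$ be positive integers with $n=\sum_{i=1}^{t}n_{i}+s$ and $n_{1}\leq n-s-p(t-1)$. Then $$\rho_{\alpha}\big(K_{s}\vee(K_{n_{1}}\cup K_{n_{2}}\cup\cdots\cup K_{n_{t}})\big)\leq\rho_{\alpha}\big(K_{s}\vee(K_{n-s-p(t-1)}\cup(t-1)K_{p})\big),$$ with equality if and only if $(n_1,n_2,\ldots,n_t)=(n-s-p(t-1),p,\ldots,p)$.
   Context: For a graph $G$, $A(G)$ is its adjacency matrix and $D(G)$ the diagonal matrix of vertex degrees. For $\alpha\in[0,1]$, $A_{\alpha}(G)=\alpha D(G)+(1-\alpha)A(G)$, and $\rho_{\alpha}(G)$ denotes the largest eigenvalue of $A_{\alpha}(G)$. $K_m$ is the complete graph on $m$ vertices, $(t-1)K_p$ is the disjoint union of $t-1$ copies of $K_p$, $\cup$ denotes disjoint union, and $G_1\vee G_2$ (join) is obtained from $G_1\cup G_2$ by adding all edges between $V(G_1)$ and $V(G_2)$. *)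

theory Defs
  imports "Jordan_Normal_Form.Char_Poly"
begin

text \<open>Graphs on the vertex set {0..<n}, given by a symmetric irreflexive relation E.\<close>

definition adj_mat :: "nat \<Rightarrow> (nat \<Rightarrow> nat \<Rightarrow> bool) \<Rightarrow> real mat" where
  "adj_mat n E = mat n n (\<lambda>(i,j). if E i j then 1 else 0)"

definition vdeg :: "nat \<Rightarrow> (nat \<Rightarrow> nat \<Rightarrow> bool) \<Rightarrow> nat \<Rightarrow> nat" where
  "vdeg n E i = card {k \<in> {0..<n}. E i k}"

definition deg_mat :: "nat \<Rightarrow> (nat \<Rightarrow> nat \<Rightarrow> bool) \<Rightarrow> real mat" where
  "deg_mat n E = mat n n (\<lambda>(i,j). if i = j then real (vdeg n E i) else 0)"

definition A_alpha :: "real \<Rightarrow> nat \<Rightarrow> (nat \<Rightarrow> nat \<Rightarrow> bool) \<Rightarrow> real mat" where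
  "A_alpha \<alpha> n E = \<alpha> \<cdot>\<^sub>m deg_mat n E + (1 - \<alpha>) \<cdot>\<^sub>m adj_mat n E"

definition rho_alpha :: "real \<Rightarrow> nat \<Rightarrow> (nat \<Rightarrow> nat \<Rightarrow> bool) \<Rightarrow> real" where
  "rho_alpha \<alpha> n E = Max {k. eigenvalue (A_alpha \<alpha> n E) k}"

text \<open>Index of the clique containing position k of the disjoint union of cliques
  of sizes ns (positions 0..<sum_list ns, blocks laid out consecutively).\<close>
definition blk :: "nat list \<Rightarrow> nat \<Rightarrow> nat" where
  "blk ns k = (LEAST j. k < sum_list (take (Suc j) ns))"

text \<open>K_s join (K_{n_1} \<union> ... \<union> K_{n_t}): vertices 0..<s form K_s,
  vertices s..<s + sum_list ns form the cliques.\<close>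
definition join_cliques_adj :: "nat \<Rightarrow> nat list \<Rightarrow> nat \<Rightarrow> nat \<Rightarrow> bool" where
  "join_cliques_adj s ns u v \<longleftrightarrow> u \<noteq> v \<and> u < s + sum_list ns \<and> v < s + sum_list ns \<and>
     (u < s \<or> v < s \<or> blk ns (u - s) = blk ns (v - s))"

definition rho_join_cliques :: "real \<Rightarrow> nat \<Rightarrow> nat list \<Rightarrow> real" where
  "rho_join_cliques \<alpha> s ns = rho_alpha \<alpha> (s + sum_list ns) (join_cliques_adj s ns)"

end

theory Submission
  imports Defs "HOL-Computational_Algebra.Polynomial"
begin

abbreviation P :: "nat list \<Rightarrow> nat \<Rightarrow> nat" where "P ns j \<equiv> sum_list (take j ns)"

lemma P_mono: "i \<le> j \<Longrightarrow> P ns i \<le> P ns j"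
proof -
  assume "i \<le> j"
  then obtain d where "j = i + d" using le_Suc_ex by blast
  then show ?thesis by (simp add: take_add)
qed

lemma P_Suc: "j < length ns \<Longrightarrow> P ns (Suc j) = P ns j + ns ! j"
  by (simp add: take_Suc_conv_app_nth)

lemma blk_bounds:
  assumes "k < sum_list ns"
  shows "blk ns k < length ns \<and> P ns (blk ns k) \<le> k \<and> k < P ns (Suc (blk ns k))"
proof -
  let ?Q = "\<lambda>j. k < P ns (Suc j)"
  have q: "?Q (length ns - 1)" using assms
    by (cases ns) auto
  have b: "blk ns k = (LEAST j. ?Q j)" unfolding blk_def by simp
  have 1: "?Q (blk ns k)" unfolding b by (rule LeastI[of ?Q, OF q])
  have 2: "blk ns k \<le> length ns - 1" unfolding b by (rule Least_le[of ?Q, OF q])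
  have ne: "ns \<noteq> []" using assms by auto
  have 3: "P ns (blk ns k) \<le> k"
  proof (cases "blk ns k")
    case 0 then show ?thesis by simp
  next
    case (Suc i)
    then have "i < (LEAST j. ?Q j)" using b by simp
    then have "\<not> ?Q i" by (rule not_less_Least)
    then show ?thesis using Suc by simp
  qed
  have "length ns > 0" using ne by simp
  then show ?thesis using 1 2 3 by linarith
qed

lemma blk_eq_iff:
  assumes "k < sum_list ns" "j < length ns"
  shows "blk ns k = j \<longleftrightarrow> P ns j \<le> k \<and> k < P ns (Suc j)"
proof
  assume "blk ns k = j" then show "P ns j \<le> k \<and> k < P ns (Suc j)" using blk_bounds[OF assms(1)] by auto
next
  assume h: "P ns j \<le> k \<and> k < P ns (Suc j)"
  let ?b = "blk ns k"
  have bb: "P ns ?b \<le> k" "k < P ns (Suc ?b)" using blk_bounds[OF assms(1)] by auto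
  show "?b = j"
  proof (rule ccontr)
    assume "?b \<noteq> j"
    then consider "?b < j" | "j < ?b" by linarith
    then show False
    proof cases
      case 1 then have "P ns (Suc ?b) \<le> P ns j" by (intro P_mono) auto
      then show False using h bb by auto
    next
      case 2 then have "P ns (Suc j) \<le> P ns ?b" by (intro P_mono) auto
      then show False using h bb by auto
    qed
  qed
qed

lemma blk_set:
  assumes "j < length ns"
  shows "{k. k < sum_list ns \<and> blk ns k = j} = {P ns j..<P ns (Suc j)}"
proof -
  have le: "P ns (Suc j) \<le> sum_list ns" using P_mono[of "Suc j" "length ns" ns] assms by simp
  show ?thesis
  proof (rule equalityI; rule subsetI)
    fix k assume "k \<in> {k. k < sum_list ns \<and> blk ns k = j}"
    then show "k \<in> {P ns j..<P ns (Suc j)}" using blk_eq_iff[OF _ assms, of k] by auto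
  next
    fix k assume h: "k \<in> {P ns j..<P ns (Suc j)}" 
    then have "k < sum_list ns" using le by auto
    then show "k \<in> {k. k < sum_list ns \<and> blk ns k = j}" using blk_eq_iff[OF _ assms, of k] h by auto
  qed
qed

lemma blk_card:
  assumes "j < length ns"
  shows "card {k. k < sum_list ns \<and> blk ns k = j} = ns ! j"
  using blk_set[OF assms] P_Suc[OF assms] by simp



lemma mulvec:
  assumes "v \<in> carrier_vec n" "u < n"
  shows "(A_alpha \<alpha> n E *\<^sub>v v) $ u = \<alpha> * real (vdeg n E u) * v $ u
     + (1 - \<alpha>) * (\<Sum>w<n. if E u w then v $ w else 0)"
proof -
  have "(A_alpha \<alpha> n E *\<^sub>v v) $ u = (\<Sum>w<n. (\<alpha> * (if u = w then real (vdeg n E u) else 0)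
      + (1 - \<alpha>) * (if E u w then 1 else 0)) * v $ w)"
    using assms unfolding A_alpha_def deg_mat_def adj_mat_def
    by (simp add: scalar_prod_def lessThan_atLeast0)
  also have "\<dots> = (\<Sum>w<n. \<alpha> * (if u = w then real (vdeg n E u) else 0) * v $ w)
      + (\<Sum>w<n. (1 - \<alpha>) * ((if E u w then v $ w else 0)))"
    by (subst sum.distrib[symmetric]) (rule sum.cong, auto simp: algebra_simps)
  also have "(\<Sum>w<n. \<alpha> * (if u = w then real (vdeg n E u) else 0) * v $ w)
       = \<alpha> * real (vdeg n E u) * v $ u"
  proof -
    have "(\<Sum>w<n. \<alpha> * (if u = w then real (vdeg n E u) else 0) * v $ w)
       = (\<Sum>w<n. if u = w then \<alpha> * real (vdeg n E u) * v $ u else 0)"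
      by (rule sum.cong) auto
    then show ?thesis using assms(2) by simp
  qed
  finally show ?thesis by (simp add: sum_distrib_left)
qed

lemma nbr_sum:
  fixes x :: "nat \<Rightarrow> real"
  assumes "u < s + sum_list ns"
  shows "(\<Sum>w<s + sum_list ns. if join_cliques_adj s ns u w then x w else 0)
    = (\<Sum>w<s. x w) + (if u < s then (\<Sum>k<sum_list ns. x (s+k))
         else (\<Sum>k\<in>{k. k < sum_list ns \<and> blk ns k = blk ns (u-s)}. x (s+k))) - x u"
proof -
  define K where "K = (if u < s then {k. k < sum_list ns} else {k. k < sum_list ns \<and> blk ns k = blk ns (u-s)})"
  define T where "T = {0..<s} \<union> (\<lambda>k. s + k) ` K"
  have finK: "finite K" unfolding K_def by auto
  have uT: "u \<in> T"
  proof (cases "u < s")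
    case True then show ?thesis unfolding T_def by auto
  next
    case False
    then have "u - s \<in> K" using assms unfolding K_def by auto
    then have "s + (u - s) \<in> (\<lambda>k. s + k) ` K" by blast
    then show ?thesis using False unfolding T_def by auto
  qed
  have N: "{w \<in> {..<s + sum_list ns}. join_cliques_adj s ns u w} = T - {u}"
  proof (rule equalityI; rule subsetI)
    fix w assume "w \<in> {w \<in> {..<s + sum_list ns}. join_cliques_adj s ns u w}"
    then have w: "w < s + sum_list ns" "w \<noteq> u" "u < s \<or> w < s \<or> blk ns (u - s) = blk ns (w - s)"
      unfolding join_cliques_adj_def by auto
    show "w \<in> T - {u}"
    proof (cases "w < s")
      case True then show ?thesis using w unfolding T_def by auto
    next
      case False
      then have "w - s \<in> K" using w unfolding K_def by auto
      then have "s + (w - s) \<in> (\<lambda>k. s + k) ` K" by blast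
      then show ?thesis using False w unfolding T_def by auto
    qed
  next
    fix w assume "w \<in> T - {u}"
    then show "w \<in> {w \<in> {..<s + sum_list ns}. join_cliques_adj s ns u w}"
      using assms unfolding T_def K_def join_cliques_adj_def by (auto split: if_splits)
  qed
  have "(\<Sum>w<s + sum_list ns. if join_cliques_adj s ns u w then x w else 0) = sum x {w \<in> {..<s + sum_list ns}. join_cliques_adj s ns u w}"
    by (rule sum.inter_filter[symmetric]) simp
  also have "\<dots> = sum x (T - {u})" using N by simp
  also have "\<dots> = sum x T - x u" using uT finK unfolding T_def by (simp add: sum_diff1)
  also have "sum x T = (\<Sum>w<s. x w) + sum x ((\<lambda>k. s + k) ` K)"
    unfolding T_def using finK by (subst sum.union_disjoint) (auto simp: lessThan_atLeast0)
  also have "sum x ((\<lambda>k. s + k) ` K) = (\<Sum>k\<in>K. x (s + k))"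
    by (subst sum.reindex) (auto simp: inj_on_def)
  finally show ?thesis unfolding K_def by (simp add: lessThan_def)
qed



definition pole :: "real \<Rightarrow> nat \<Rightarrow> nat \<Rightarrow> real" where
  "pole \<alpha> s m = real m - 1 + \<alpha> * real s"

definition FF :: "real \<Rightarrow> nat \<Rightarrow> nat list \<Rightarrow> real \<Rightarrow> real" where
  "FF \<alpha> s ms x = x - \<alpha> * (real (s + sum_list ms) - 1) - (1 - \<alpha>) * (real s - 1)
     - real s * (1 - \<alpha>)^2 * (\<Sum>j<length ms. real (ms ! j) / (x - pole \<alpha> s (ms ! j)))"

definition Bk :: "nat list \<Rightarrow> nat \<Rightarrow> nat set" where
  "Bk ns j = {k. k < sum_list ns \<and> blk ns k = j}"

lemma deg_join:
  assumes "u < s + sum_list ns"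
  shows "real (vdeg (s + sum_list ns) (join_cliques_adj s ns) u)
    = real s + (if u < s then real (sum_list ns) else real (ns ! blk ns (u - s))) - 1"
proof -
  have "real (vdeg (s + sum_list ns) (join_cliques_adj s ns) u)
      = (\<Sum>w<s + sum_list ns. if join_cliques_adj s ns u w then (1::real) else 0)"
    unfolding vdeg_def by (simp add: sum.If_cases lessThan_atLeast0 Int_def conj_commute)
  also have "\<dots> = real s + (if u < s then real (sum_list ns) else real (ns ! blk ns (u - s))) - 1"
    using nbr_sum[OF assms, of "\<lambda>_. 1"] blk_card[of "blk ns (u-s)" ns] blk_bounds[of "u - s" ns] assms
    by auto
  finally show ?thesis .
qed

lemma mulvec_join:
  assumes "v \<in> carrier_vec (s + sum_list ns)" "u < s + sum_list ns"
  shows "(A_alpha \<alpha> (s + sum_list ns) (join_cliques_adj s ns) *\<^sub>v v) $ u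
    = \<alpha> * (real s + (if u < s then real (sum_list ns) else real (ns ! blk ns (u - s))) - 1) * v $ u
     + (1 - \<alpha>) * ((\<Sum>w<s. v $ w) + (if u < s then (\<Sum>k<sum_list ns. v $ (s+k))
         else (\<Sum>k\<in>Bk ns (blk ns (u-s)). v $ (s+k))) - v $ u)"
  unfolding mulvec[OF assms] deg_join[OF assms(2)] nbr_sum[OF assms(2)] Bk_def by simp



lemma dim_A[simp]: "dim_row (A_alpha \<alpha> n E) = n" "dim_col (A_alpha \<alpha> n E) = n"
  unfolding A_alpha_def deg_mat_def adj_mat_def by auto

lemma A_carrier: "A_alpha \<alpha> n E \<in> carrier_mat n n"
  unfolding carrier_mat_def by simp

lemma Z_group:
  fixes x :: "nat \<Rightarrow> real"
  shows "(\<Sum>k<sum_list ns. x k) = (\<Sum>j<length ns. \<Sum>k\<in>Bk ns j. x k)"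
proof -
  have "(\<Sum>j<length ns. \<Sum>k\<in>{k \<in> {..<sum_list ns}. blk ns k = j}. x k) = (\<Sum>k<sum_list ns. x k)"
    by (rule sum.group) (auto dest: blk_bounds)
  then show ?thesis unfolding Bk_def by simp
qed

lemma card_Bk: "j < length ns \<Longrightarrow> card (Bk ns j) = ns ! j"
  unfolding Bk_def by (rule blk_card)

lemma Bk_mem: "k \<in> Bk ns j \<Longrightarrow> k < sum_list ns \<and> blk ns k = j"
  unfolding Bk_def by auto


lemma ev_nec:
  fixes \<alpha> lam :: real
  assumes a0: "0 \<le> \<alpha>" and a1: "\<alpha> < 1" and s1: "s \<ge> 1"
    and ev: "eigenvector (A_alpha \<alpha> (s + sum_list ms) (join_cliques_adj s ms)) v lam"
    and lp: "\<forall>j<length ms. lam > pole \<alpha> s (ms ! j)"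
    and ln: "lam > \<alpha> * real (s + sum_list ms) - 1"
  shows "FF \<alpha> s ms lam = 0"
proof -
  define n where "n = s + sum_list ms"
  define A where "A = A_alpha \<alpha> n (join_cliques_adj s ms)"
  define t where "t = length ms"
  have vc: "v \<in> carrier_vec n" and vn: "v \<noteq> 0\<^sub>v n" and Av: "A *\<^sub>v v = lam \<cdot>\<^sub>v v"
    using ev unfolding eigenvector_def A_def n_def by auto
  define Y where "Y = (\<Sum>w<s. v $ w)"
  define S where "S = (\<lambda>j. \<Sum>k\<in>Bk ms j. v $ (s+k))"
  define Z where "Z = (\<Sum>k<sum_list ms. v $ (s+k))"
  have Z: "Z = (\<Sum>j<t. S j)" unfolding Z_def S_def t_def by (rule Z_group)
  have eq: "lam * v $ u = \<alpha> * (real s + (if u < s then real (sum_list ms) else real (ms ! blk ms (u - s))) - 1) * v $ u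
     + (1 - \<alpha>) * (Y + (if u < s then Z else S (blk ms (u-s))) - v $ u)" if "u < n" for u
  proof -
    have "(A *\<^sub>v v) $ u = (lam \<cdot>\<^sub>v v) $ u" using Av by simp
    then show ?thesis using mulvec_join[of v s ms u \<alpha>] vc that unfolding A_def n_def Y_def Z_def S_def
      by simp
  qed
  have blockeq: "(lam - \<alpha> * (real s + real (ms ! j) - 1) + (1 - \<alpha>)) * v $ (s+k) = (1 - \<alpha>) * (Y + S j)"
    if "j < t" "k \<in> Bk ms j" for j k
  proof -
    have k: "k < sum_list ms" "blk ms k = j" using Bk_mem[OF that(2)] by auto
    have "s + k < n" using k unfolding n_def by simp
    from eq[OF this] k show ?thesis by (simp add: algebra_simps)
  qed
  have Seq: "(lam - pole \<alpha> s (ms ! j)) * S j = real (ms ! j) * (1 - \<alpha>) * Y" if "j < t" for j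
  proof -
    have "(lam - \<alpha> * (real s + real (ms ! j) - 1) + (1 - \<alpha>)) * S j
        = (\<Sum>k\<in>Bk ms j. (lam - \<alpha> * (real s + real (ms ! j) - 1) + (1 - \<alpha>)) * v $ (s+k))"
      by (simp add: S_def sum_distrib_left)
    also have "\<dots> = (\<Sum>k\<in>Bk ms j. (1 - \<alpha>) * (Y + S j))"
      using blockeq[OF that] by (intro sum.cong) auto
    also have "\<dots> = real (ms ! j) * ((1 - \<alpha>) * (Y + S j))"
      using card_Bk[of j ms] that unfolding t_def by simp
    finally show ?thesis unfolding pole_def by (simp add: algebra_simps)
  qed
  have topeq: "(lam - \<alpha> * (real n - 1) + (1 - \<alpha>)) * v $ u = (1 - \<alpha>) * (Y + Z)" if "u < s" for u
  proof -
    have "u < n" using that unfolding n_def by simp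
    from eq[OF this] that show ?thesis unfolding n_def by (simp add: algebra_simps)
  qed
  have Yeq: "(lam - \<alpha> * (real n - 1) + (1 - \<alpha>)) * Y = real s * ((1 - \<alpha>) * (Y + Z))"
  proof -
    have "(lam - \<alpha> * (real n - 1) + (1 - \<alpha>)) * Y = (\<Sum>u<s. (lam - \<alpha> * (real n - 1) + (1 - \<alpha>)) * v $ u)"
      by (simp add: Y_def sum_distrib_left)
    also have "\<dots> = (\<Sum>u<s. (1 - \<alpha>) * (Y + Z))"
      using topeq by (intro sum.cong) auto
    finally have "(lam - \<alpha> * (real n - 1) + (1 - \<alpha>)) * Y = (\<Sum>u<s. (1 - \<alpha>) * (Y + Z))" .
    then show ?thesis by simp
  qed
  have pos: "lam - pole \<alpha> s (ms ! j) > 0" if "j < t" for j using lp that unfolding t_def by auto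
  have Sj: "S j = real (ms ! j) * (1 - \<alpha>) * Y / (lam - pole \<alpha> s (ms ! j))" if "j < t" for j
    using Seq[OF that] pos[OF that] by (simp add: field_simps)
  have Y0: "Y \<noteq> 0"
  proof
    assume Y0: "Y = 0"
    then have S0: "S j = 0" if "j < t" for j using Sj[OF that] by simp
    then have Z0: "Z = 0" unfolding Z by simp
    have "v $ u = 0" if "u < n" for u
    proof (cases "u < s")
      case True
      have "lam - \<alpha> * (real n - 1) + (1 - \<alpha>) > 0" using ln unfolding n_def by (simp add: algebra_simps)
      then show ?thesis using topeq[OF True] Y0 Z0 by simp
    next
      case False
      define k where "k = u - s"
      have k: "k < sum_list ms" using that False unfolding k_def n_def by simp
      define j where "j = blk ms k"
      have j: "j < t" "k \<in> Bk ms j" using blk_bounds[OF k] k unfolding j_def t_def Bk_def by auto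
      have "ms ! j \<le> sum_list ms" using elem_le_sum_list j unfolding t_def by auto
      then have "\<alpha> * (real s + real (ms ! j)) \<le> \<alpha> * real n"
        using a0 unfolding n_def by (intro mult_left_mono) auto
      then have "lam - \<alpha> * (real s + real (ms ! j) - 1) + (1 - \<alpha>) > 0" using ln unfolding n_def
        by (simp add: algebra_simps)
      moreover have "u = s + k" using False unfolding k_def by simp
      ultimately show ?thesis using blockeq[OF j] Y0 S0[OF j(1)] by simp
    qed
    then have "v = 0\<^sub>v n" using vc by (intro eq_vecI) auto
    then show False using vn by simp
  qed
  have "Z = (\<Sum>j<t. real (ms ! j) * (1 - \<alpha>) * Y / (lam - pole \<alpha> s (ms ! j)))"
    unfolding Z using Sj by simp
  also have "\<dots> = (1 - \<alpha>) * Y * (\<Sum>j<t. real (ms ! j) / (lam - pole \<alpha> s (ms ! j)))"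
    by (simp add: sum_distrib_left algebra_simps)
  finally have Zf: "Z = (1 - \<alpha>) * Y * (\<Sum>j<t. real (ms ! j) / (lam - pole \<alpha> s (ms ! j)))" .
  have "Y * FF \<alpha> s ms lam = 0"
    using Yeq unfolding FF_def Zf n_def t_def power2_eq_square by (simp add: algebra_simps)
  then show ?thesis using Y0 by simp
qed


lemma ar1: fixes a s m x r :: real
  shows "x*(r - (m - 1 + a*s)) = (1-a)*s \<Longrightarrow> a*(s + m - 1)*x + (1-a)*(s + m*x - x) = r*x"
  by (simp add: algebra_simps)
lemma ar2: fixes a s S Q r :: real
  shows "r = a*(s+S-1) + (1-a)*(s-1) + s*(1-a)*(1-a)*Q \<Longrightarrow> a*(s + S - 1)*1 + (1-a)*(s + (1-a)*s*Q - 1) = r*1"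
  by (simp add: algebra_simps)

lemma ev_suff:
  fixes \<alpha> r :: real
  assumes a1: "\<alpha> < 1" and s1: "s \<ge> 1"
    and lp: "\<forall>j<length ms. r > pole \<alpha> s (ms ! j)"
    and F0: "FF \<alpha> s ms r = 0"
  shows "eigenvalue (A_alpha \<alpha> (s + sum_list ms) (join_cliques_adj s ms)) r"
proof -
  define n where "n = s + sum_list ms"
  define t where "t = length ms"
  define xj where "xj = (\<lambda>j. (1 - \<alpha>) * real s / (r - pole \<alpha> s (ms ! j)))"
  define v where "v = vec n (\<lambda>u. if u < s then 1 else xj (blk ms (u - s)))"
  have vc: "v \<in> carrier_vec n" unfolding v_def by simp
  have Y: "(\<Sum>w<s. v $ w) = real s" unfolding v_def n_def by simp
  have S: "(\<Sum>k\<in>Bk ms j. v $ (s+k)) = real (ms ! j) * xj j" if "j < t" for j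
  proof -
    have "(\<Sum>k\<in>Bk ms j. v $ (s+k)) = (\<Sum>k\<in>Bk ms j. xj j)"
      by (rule sum.cong) (auto simp: v_def n_def dest: Bk_mem)
    then show ?thesis using card_Bk[of j ms] that unfolding t_def by simp
  qed
  have Z: "(\<Sum>k<sum_list ms. v $ (s+k)) = (1 - \<alpha>) * real s * (\<Sum>j<t. real (ms ! j) / (r - pole \<alpha> s (ms ! j)))"
  proof -
    have "(\<Sum>k<sum_list ms. v $ (s+k)) = (\<Sum>j<t. real (ms ! j) * xj j)"
      unfolding Z_group[of "\<lambda>k. v $ (s+k)" ms] t_def[symmetric] using S by (intro sum.cong) auto
    also have "\<dots> = (1 - \<alpha>) * real s * (\<Sum>j<t. real (ms ! j) / (r - pole \<alpha> s (ms ! j)))"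
      unfolding xj_def sum_distrib_left by (intro sum.cong refl) (simp add: field_simps)
    finally show ?thesis .
  qed
  have Av: "A_alpha \<alpha> n (join_cliques_adj s ms) *\<^sub>v v = r \<cdot>\<^sub>v v"
  proof (rule eq_vecI)
    fix u assume "u < dim_vec (r \<cdot>\<^sub>v v)"
    then have u: "u < n" unfolding v_def by simp
    show "(A_alpha \<alpha> n (join_cliques_adj s ms) *\<^sub>v v) $ u = (r \<cdot>\<^sub>v v) $ u"
    proof (cases "u < s")
      case True
      have vu: "v $ u = 1" using True u unfolding v_def by simp
      have ru: "(r \<cdot>\<^sub>v v) $ u = r * v $ u" using u vc by simp
      define Q where "Q = (\<Sum>j<t. real (ms ! j) / (r - pole \<alpha> s (ms ! j)))"
      have F0': "r = \<alpha> * (real s + real (sum_list ms) - 1) + (1 - \<alpha>) * (real s - 1) + real s * (1 - \<alpha>) * (1 - \<alpha>) * Q"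
        using F0 unfolding FF_def Q_def t_def power2_eq_square by simp
      have Z': "(\<Sum>k<sum_list ms. v $ (s+k)) = (1 - \<alpha>) * real s * Q" using Z unfolding Q_def .
      show ?thesis
        unfolding n_def mulvec_join[OF vc[unfolded n_def] u[unfolded n_def]] ru
        unfolding if_P[OF True] Y Z' vu
        by (rule ar2[OF F0'])
    next
      case False
      define k where "k = u - s"
      have k: "k < sum_list ms" using u False unfolding k_def n_def by simp
      define j where "j = blk ms k"
      have j: "j < t" using blk_bounds[OF k] unfolding j_def t_def by auto
      have vu: "v $ u = xj j" using False u unfolding v_def j_def k_def by simp
      have pj: "r - pole \<alpha> s (ms ! j) > 0" using lp j unfolding t_def by auto
      have xe: "xj j * (r - pole \<alpha> s (ms ! j)) = (1 - \<alpha>) * real s"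
        unfolding xj_def using pj by simp
      have ru: "(r \<cdot>\<^sub>v v) $ u = r * v $ u" using u vc by simp
      have bj: "blk ms (u - s) = j" unfolding j_def k_def ..
      have e1: "real (ms ! blk ms (u - s)) = real (ms ! j)" using bj by simp
      have e2: "(\<Sum>k\<in>Bk ms (blk ms (u - s)). v $ (s + k)) = real (ms ! j) * xj j" using bj S[OF j] by simp
      show ?thesis
        unfolding n_def mulvec_join[OF vc[unfolded n_def] u[unfolded n_def]] ru
        unfolding if_not_P[OF False] e1 e2 Y vu
        using xe unfolding pole_def
        by (rule ar1)
    qed
  next
    show "dim_vec (A_alpha \<alpha> n (join_cliques_adj s ms) *\<^sub>v v) = dim_vec (r \<cdot>\<^sub>v v)"
      unfolding v_def by simp
  qed
  have "v $ 0 = 1" using s1 unfolding v_def n_def by simp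
  moreover have "0 < n" using s1 unfolding n_def by simp
  ultimately have "v \<noteq> 0\<^sub>v n" by auto
  then have "eigenvector (A_alpha \<alpha> n (join_cliques_adj s ms)) v r"
    unfolding eigenvector_def using vc Av by simp
  then show ?thesis unfolding eigenvalue_def n_def by blast
qed



lemma sum_nth_real: "(\<Sum>j<length ms. real (ms ! j)) = real (sum_list ms)"
  by (simp add: sum_list_sum_nth lessThan_atLeast0)

lemma FF_mono:
  assumes lp: "\<forall>j<length ms. x > pole \<alpha> s (ms ! j)" and xy: "x < y"
  shows "FF \<alpha> s ms x < FF \<alpha> s ms y"
proof -
  have "(\<Sum>j<length ms. real (ms ! j) / (y - pole \<alpha> s (ms ! j)))
      \<le> (\<Sum>j<length ms. real (ms ! j) / (x - pole \<alpha> s (ms ! j)))"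
  proof (rule sum_mono)
    fix j assume "j \<in> {..<length ms}"
    then have "x - pole \<alpha> s (ms ! j) > 0" using lp by auto
    then show "real (ms ! j) / (y - pole \<alpha> s (ms ! j)) \<le> real (ms ! j) / (x - pole \<alpha> s (ms ! j))"
      using xy by (intro divide_left_mono) (auto intro: mult_pos_pos)
  qed
  moreover have "real s * (1 - \<alpha>)^2 \<ge> 0" by simp
  ultimately have "real s * (1 - \<alpha>)^2 * (\<Sum>j<length ms. real (ms ! j) / (y - pole \<alpha> s (ms ! j)))
      \<le> real s * (1 - \<alpha>)^2 * (\<Sum>j<length ms. real (ms ! j) / (x - pole \<alpha> s (ms ! j)))"
    by (rule mult_left_mono)
  then show ?thesis unfolding FF_def using xy by linarith
qed

lemma sum_nonneg_FF:
  assumes lp: "\<forall>j<length ms. x > pole \<alpha> s (ms ! j)"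
  shows "(\<Sum>j<length ms. real (ms ! j) / (x - pole \<alpha> s (ms ! j))) \<ge> 0"
  using lp by (intro sum_nonneg) auto

lemma rho_char:
  assumes a0: "0 \<le> \<alpha>" and a1: "\<alpha> < 1" and s1: "s \<ge> 1"
    and lp: "\<forall>j<length ms. r > pole \<alpha> s (ms ! j)" and F0: "FF \<alpha> s ms r = 0"
  shows "rho_join_cliques \<alpha> s ms = r"
proof -
  define n where "n = s + sum_list ms"
  define A where "A = A_alpha \<alpha> n (join_cliques_adj s ms)"
  define ES where "ES = {k. eigenvalue A k}"
  have Ac: "A \<in> carrier_mat n n" unfolding A_def by (rule A_carrier)
  have "char_poly A \<noteq> 0" using degree_monic_char_poly[OF Ac] by auto
  then have "finite {k. poly (char_poly A) k = 0}" by (rule poly_roots_finite)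
  moreover have "ES = {k. poly (char_poly A) k = 0}"
    unfolding ES_def using eigenvalue_root_char_poly[OF Ac] by auto
  ultimately have fin: "finite ES" by simp
  have rin: "r \<in> ES" unfolding ES_def A_def n_def using ev_suff[OF a1 s1 lp F0] by simp
  have "real s * (1 - \<alpha>)^2 * (\<Sum>j<length ms. real (ms ! j) / (r - pole \<alpha> s (ms ! j))) \<ge> 0"
    using sum_nonneg_FF[OF lp] by simp
  then have rge: "r \<ge> \<alpha> * (real n - 1) + (1 - \<alpha>) * (real s - 1)" using F0 unfolding FF_def n_def by linarith
  have "(1 - \<alpha>) * real s > 0" using a1 s1 by simp
  then have rn: "r > \<alpha> * real n - 1" using rge by (simp add: algebra_simps)
  have le: "y \<le> r" if "y \<in> ES" for y
  proof (rule ccontr)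
    assume "\<not> y \<le> r"
    then have yr: "y > r" by simp
    from that obtain v where ev: "eigenvector A v y" unfolding ES_def eigenvalue_def by auto
    have lpy: "\<forall>j<length ms. y > pole \<alpha> s (ms ! j)" using lp yr by force
    have "y > \<alpha> * real (s + sum_list ms) - 1" using rn yr unfolding n_def by simp
    from ev_nec[OF a0 a1 s1 ev[unfolded A_def n_def] lpy this] have "FF \<alpha> s ms y = 0" .
    moreover have "FF \<alpha> s ms r < FF \<alpha> s ms y" by (rule FF_mono[OF lp yr])
    ultimately show False using F0 by simp
  qed
  have "Max ES = r" using fin rin le by (intro Max_eqI) auto
  then show ?thesis unfolding rho_join_cliques_def rho_alpha_def ES_def A_def n_def by simp
qed



lemma FF_cont:
  assumes "\<forall>x\<in>{a..b}. \<forall>j<length ms. x > pole \<alpha> s (ms ! j)"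
  shows "continuous_on {a..b} (FF \<alpha> s ms)"
proof -
  have "continuous_on {a..b} (\<lambda>x. x - \<alpha> * (real (s + sum_list ms) - 1) - (1 - \<alpha>) * (real s - 1)
     - real s * (1 - \<alpha>)^2 * (\<Sum>j<length ms. real (ms ! j) / (x - pole \<alpha> s (ms ! j))))"
  proof (intro continuous_intros ballI)
    fix x j assume "x \<in> {a..b}" "j \<in> {..<length ms}"
    then have "x > pole \<alpha> s (ms ! j)" using assms by auto
    then show "x - pole \<alpha> s (ms ! j) \<noteq> 0" by simp
  qed
  then show ?thesis unfolding FF_def[abs_def] .
qed

lemma FF_root_exists:
  assumes a1: "\<alpha> < 1" and s1: "s \<ge> 1" and ne: "ms \<noteq> []" and pos: "\<forall>m\<in>set ms. m \<ge> 1"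
  shows "\<exists>r. (\<forall>j<length ms. r > pole \<alpha> s (ms ! j)) \<and> FF \<alpha> s ms r = 0"
proof -
  define m0 where "m0 = Max (set ms)"
  have m0in: "m0 \<in> set ms" unfolding m0_def using ne by simp
  then obtain j0 where j0: "j0 < length ms" "ms ! j0 = m0" by (auto simp: in_set_conv_nth)
  have m0ge: "ms ! j \<le> m0" if "j < length ms" for j unfolding m0_def using that by simp
  define M where "M = pole \<alpha> s m0"
  have pM: "pole \<alpha> s (ms ! j) \<le> M" if "j < length ms" for j
    using m0ge[OF that] unfolding M_def pole_def by simp
  define K where "K = \<alpha> * (real (s + sum_list ms) - 1) + (1 - \<alpha>) * (real s - 1)"
  define c where "c = real s * (1 - \<alpha>)^2"
  have c0: "c > 0" unfolding c_def using a1 s1 by simp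
  define W where "W = real (sum_list ms)"
  have W0: "W \<ge> 0" unfolding W_def by simp
  define Q where "Q = (\<lambda>x. (\<Sum>j<length ms. real (ms ! j) / (x - pole \<alpha> s (ms ! j))))"
  have FFQ: "FF \<alpha> s ms x = x - K - c * Q x" for x unfolding FF_def K_def c_def Q_def by simp
  define b where "b = max M K + 1 + c * W"
  have cW: "c * W \<ge> 0" using c0 W0 by simp
  have bM: "b - M \<ge> 1" unfolding b_def using cW by (simp add: max_def)
  have Qb: "Q b \<le> W"
  proof -
    have "Q b \<le> (\<Sum>j<length ms. real (ms ! j))" unfolding Q_def
    proof (rule sum_mono)
      fix j assume "j \<in> {..<length ms}"
      then have "b - pole \<alpha> s (ms ! j) \<ge> 1" using pM[of j] bM by auto
      then show "real (ms ! j) / (b - pole \<alpha> s (ms ! j)) \<le> real (ms ! j)"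
        using divide_left_mono[of 1 "b - pole \<alpha> s (ms ! j)" "real (ms ! j)"] by simp
    qed
    then show ?thesis unfolding W_def sum_nth_real .
  qed
  have Fb: "FF \<alpha> s ms b \<ge> 0"
  proof -
    have "c * Q b \<le> c * W" using Qb c0 by simp
    moreover have "b - K \<ge> 1 + c * W" unfolding b_def by (simp add: max_def)
    ultimately show ?thesis unfolding FFQ by linarith
  qed
  define e where "e = min 1 (c / (\<bar>M - K\<bar> + 2))"
  have e0: "e > 0" unfolding e_def using c0 by simp
  have e1: "e \<le> 1" unfolding e_def by simp
  have ce: "c / e \<ge> \<bar>M - K\<bar> + 2"
  proof -
    have "e \<le> c / (\<bar>M - K\<bar> + 2)" unfolding e_def by simp
    then have "e * (\<bar>M - K\<bar> + 2) \<le> c" by (simp add: le_divide_eq)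
    then show ?thesis using e0 by (simp add: le_divide_eq mult.commute)
  qed
  define a where "a = M + e"
  have Qa: "Q a \<ge> 1 / e"
  proof -
    have "Q a \<ge> real (ms ! j0) / (a - pole \<alpha> s (ms ! j0))" unfolding Q_def
    proof (rule member_le_sum)
      show "j0 \<in> {..<length ms}" using j0 by simp
      fix j assume "j \<in> {..<length ms} - {j0}"
      then have "a - pole \<alpha> s (ms ! j) > 0" using pM[of j] e0 unfolding a_def by auto
      then show "real (ms ! j) / (a - pole \<alpha> s (ms ! j)) \<ge> 0" by simp
    qed simp
    moreover have "real (ms ! j0) / (a - pole \<alpha> s (ms ! j0)) = real m0 / e"
      unfolding a_def M_def j0 by simp
    moreover have "real m0 / e \<ge> 1 / e" using pos m0in e0 by (simp add: divide_right_mono)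
    ultimately show ?thesis by linarith
  qed
  have Fa: "FF \<alpha> s ms a \<le> 0"
  proof -
    have "c * Q a \<ge> c * (1 / e)" using mult_left_mono[OF Qa, of c] c0 by simp
    then have "c * Q a \<ge> \<bar>M - K\<bar> + 2" using ce by simp
    then show ?thesis unfolding FFQ a_def using e1 by linarith
  qed
  have ab: "a \<le> b" unfolding a_def b_def using e1 cW by (simp add: max_def)
  have gt: "\<forall>x\<in>{a..b}. \<forall>j<length ms. x > pole \<alpha> s (ms ! j)"
  proof (intro ballI allI impI)
    fix x j assume "x \<in> {a..b}" "j < length ms"
    then show "x > pole \<alpha> s (ms ! j)" using pM[of j] e0 unfolding a_def by auto
  qed
  from IVT'[of "FF \<alpha> s ms" a 0 b, OF Fa Fb ab FF_cont[OF gt]]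
  obtain r where r: "a \<le> r" "r \<le> b" "FF \<alpha> s ms r = 0" by blast
  have "r \<in> {a..b}" using r by simp
  then have "\<forall>j<length ms. r > pole \<alpha> s (ms ! j)" using gt by blast
  then show ?thesis using r(3) by blast
qed



definition phi :: "real \<Rightarrow> real \<Rightarrow> real \<Rightarrow> real" where
  "phi c p u = (p + u) / (c - (p + u)) - p / (c - p)"

lemma core_ineq:
  fixes a u v :: real
  assumes a: "a > 0" and u: "u \<ge> 0" and v: "v \<ge> 0"
  shows "1 / (a + v) - 1 / (a + u + v) \<le> 1 / a - 1 / (a + u)"
    and "u > 0 \<Longrightarrow> v > 0 \<Longrightarrow> 1 / (a + v) - 1 / (a + u + v) < 1 / a - 1 / (a + u)"
proof -
  have e1: "1 / (a + v) - 1 / (a + u + v) = u / ((a + v) * (a + u + v))"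
    using a u v by (simp add: field_simps)
  have e2: "1 / a - 1 / (a + u) = u / (a * (a + u))"
    using a u v by (simp add: field_simps)
  have m: "a * (a + u) \<le> (a + v) * (a + u + v)" using a u v by (intro mult_mono) auto
  have p: "0 < a * (a + u)" using a u by simp
  show "1 / (a + v) - 1 / (a + u + v) \<le> 1 / a - 1 / (a + u)"
    unfolding e1 e2 using m p u by (intro divide_left_mono) auto
  assume "u > 0" "v > 0"
  then have m': "a * (a + u) < (a + v) * (a + u + v)" using a by (intro mult_strict_mono) auto
  show "1 / (a + v) - 1 / (a + u + v) < 1 / a - 1 / (a + u)"
    unfolding e1 e2 using m' p \<open>u > 0\<close> by (intro divide_strict_left_mono) auto
qed

lemma phi_alt: "c - (p + u) \<noteq> 0 \<Longrightarrow> c - p \<noteq> 0 \<Longrightarrow> phi c p u = c * (1 / (c - (p + u)) - 1 / (c - p))"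
  unfolding phi_def by (simp add: field_simps)

lemma phi_super:
  fixes c p u v :: real
  assumes p: "p \<ge> 0" and u: "u \<ge> 0" and v: "v \<ge> 0" and c: "c > p + u + v"
  shows "phi c p u + phi c p v \<le> phi c p (u + v)"
    and "u > 0 \<Longrightarrow> v > 0 \<Longrightarrow> phi c p u + phi c p v < phi c p (u + v)"
proof -
  define a where "a = c - p - u - v"
  have a: "a > 0" using c unfolding a_def by simp
  have c0: "c > 0" using p u v c by simp
  have E: "phi c p u + phi c p v - phi c p (u + v)
      = c * ((1 / (a + v) - 1 / (a + u + v)) - (1 / a - 1 / (a + u)))"
    using a p u v unfolding a_def by (subst phi_alt, simp, simp)+ (simp add: algebra_simps)
  show "phi c p u + phi c p v \<le> phi c p (u + v)"
  proof -
    have "(1 / (a + v) - 1 / (a + u + v)) - (1 / a - 1 / (a + u)) \<le> 0" using core_ineq(1)[OF a u v] by linarith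
    then have "c * ((1 / (a + v) - 1 / (a + u + v)) - (1 / a - 1 / (a + u))) \<le> 0"
      using c0 by (intro mult_nonneg_nonpos) auto
    then show ?thesis using E by linarith
  qed
  assume "u > 0" "v > 0"
  then show "phi c p u + phi c p v < phi c p (u + v)"
  proof -
    have "(1 / (a + v) - 1 / (a + u + v)) - (1 / a - 1 / (a + u)) < 0" using core_ineq(2)[OF a u v] \<open>u > 0\<close> \<open>v > 0\<close> by linarith
    then have "c * ((1 / (a + v) - 1 / (a + u + v)) - (1 / a - 1 / (a + u))) < 0"
      using c0 by (intro mult_pos_neg) auto
    then show ?thesis using E by linarith
  qed
qed

lemma phi_list:
  fixes us :: "real list"
  assumes "\<forall>x\<in>set us. x \<ge> 0" "p \<ge> 0" "c > p + sum_list us"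
  shows "sum_list (map (phi c p) us) \<le> phi c p (sum_list us)"
  using assms
proof (induction us)
  case Nil then show ?case by (simp add: phi_def)
next
  case (Cons a us)
  have s0: "sum_list us \<ge> 0" using Cons.prems by (simp add: sum_list_nonneg)
  have "sum_list (map (phi c p) us) \<le> phi c p (sum_list us)"
    using Cons by simp
  moreover have "phi c p a + phi c p (sum_list us) \<le> phi c p (a + sum_list us)"
    using Cons.prems s0 by (intro phi_super(1)) auto
  ultimately show ?case by simp
qed

lemma phi_list_strict:
  fixes us :: "real list"
  assumes "\<forall>x\<in>set us. x \<ge> 0" "p \<ge> 0" "c > p + a + sum_list us" "a > 0" "sum_list us > 0"
  shows "phi c p a + sum_list (map (phi c p) us) < phi c p (a + sum_list us)"
proof -
  have "sum_list (map (phi c p) us) \<le> phi c p (sum_list us)"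
    using assms by (intro phi_list) auto
  moreover have "phi c p a + phi c p (sum_list us) < phi c p (a + sum_list us)"
    using assms by (intro phi_super(2)) auto
  ultimately show ?thesis by simp
qed



lemma sum_list_ge: "\<forall>x\<in>set xs. x \<ge> (p::nat) \<Longrightarrow> sum_list xs \<ge> length xs * p"
  by (induction xs) auto

lemma sumnth_map: "(\<Sum>j<length xs. f (xs ! j)) = sum_list (map f xs)"
  by (simp add: sum_list_sum_nth lessThan_atLeast0)

lemma sum_shift:
  assumes "\<forall>m\<in>set xs. h m = phi c p (real m - p) + g0"
  shows "sum_list (map h xs) = sum_list (map (phi c p) (map (\<lambda>m. real m - p) xs)) + real (length xs) * g0"
  using assms by (induction xs) (auto simp: algebra_simps)

lemma sum_sub: "sum_list (map (\<lambda>m. real m - p) xs) = real (sum_list xs) - real (length xs) * p"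
  by (induction xs) (auto simp: algebra_simps)

lemma FF_sum: "FF \<alpha> s ms x = x - \<alpha> * (real (s + sum_list ms) - 1) - (1 - \<alpha>) * (real s - 1)
     - real s * (1 - \<alpha>)^2 * sum_list (map (\<lambda>m. real m / (x - pole \<alpha> s m)) ms)"
  unfolding FF_def sumnth_map[where xs=ms and f="\<lambda>m. real m / (x - pole \<alpha> s m)"] ..

theorem lemma2p6:
  fixes \<alpha> :: real and s t p n :: nat and ns :: "nat list"
  assumes "0 \<le> \<alpha>" and "\<alpha> < 1"
    and "s \<ge> 1" and "t \<ge> 1" and "p \<ge> 1"
    and "length ns = t"
    and "sorted_wrt (\<ge>) ns"
    and "\<forall>x \<in> set ns. x \<ge> p"
    and "n = sum_list ns + s"
    and "ns ! 0 \<le> n - s - p * (t - 1)"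
  shows "rho_join_cliques \<alpha> s ns \<le> rho_join_cliques \<alpha> s ((n - s - p * (t - 1)) # replicate (t - 1) p)
     \<and> (rho_join_cliques \<alpha> s ns = rho_join_cliques \<alpha> s ((n - s - p * (t - 1)) # replicate (t - 1) p)
          \<longleftrightarrow> ns = (n - s - p * (t - 1)) # replicate (t - 1) p)"
proof -
  note a0 = assms(1) and a1 = assms(2) and s1 = assms(3) and t1 = assms(4) and p1 = assms(5)
    and len = assms(6) and sorted = assms(7) and gep = assms(8) and nd = assms(9)
  define N where "N = n - s - p * (t - 1)"
  define ext where "ext = N # replicate (t - 1) p"
  obtain n1 rest where nsd: "ns = n1 # rest" using len t1 by (cases ns) auto
  have lr: "length rest = t - 1" using len nsd by simp
  have n1ge: "\<forall>x\<in>set rest. n1 \<ge> x" using sorted nsd by simp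
  have n1p: "n1 \<ge> p" using gep nsd by simp
  have restp: "\<forall>x\<in>set rest. x \<ge> p" using gep nsd by simp
  have sr: "sum_list rest \<ge> (t - 1) * p" using sum_list_ge[OF restp] lr by simp
  have Nd: "N = n1 + (sum_list rest - (t - 1) * p)" unfolding N_def nd nsd using sr by (simp add: mult.commute)
  have NrealR: "real N = real n1 + real (sum_list rest) - real (t - 1) * real p"
    using Nd sr by (simp add: of_nat_diff)
  have Nn1: "N \<ge> n1" using Nd by simp
  have sumext: "sum_list ext = sum_list ns" unfolding ext_def nsd using Nd sr by (simp add: sum_list_replicate)
  have lenext: "length ext = t" unfolding ext_def using t1 by simp
  have pos_ns: "\<forall>m\<in>set ns. m \<ge> 1" using gep p1 by auto
  have pos_ext: "\<forall>m\<in>set ext. m \<ge> 1" unfolding ext_def using Nn1 n1p p1 by auto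
  have extle: "ext ! j \<le> N" if "j < length ext" for j
    using that n1p Nn1 unfolding ext_def by (cases j) auto
  obtain rG where rGp: "\<forall>j<length ns. rG > pole \<alpha> s (ns ! j)" and rG0: "FF \<alpha> s ns rG = 0"
    using FF_root_exists[OF a1 s1 _ pos_ns] nsd by auto
  obtain rH where rHp: "\<forall>j<length ext. rH > pole \<alpha> s (ext ! j)" and rH0: "FF \<alpha> s ext rH = 0"
    using FF_root_exists[OF a1 s1 _ pos_ext] unfolding ext_def by auto
  have rhoG: "rho_join_cliques \<alpha> s ns = rG" by (rule rho_char[OF a0 a1 s1 rGp rG0])
  have rhoH: "rho_join_cliques \<alpha> s ext = rH" by (rule rho_char[OF a0 a1 s1 rHp rH0])
  have key: "rG < rH" if neq: "ns \<noteq> ext"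
  proof (cases "rG \<le> pole \<alpha> s N")
    case True
    have "rH > pole \<alpha> s (ext ! 0)" using rHp lenext t1 by auto
    then show ?thesis using True unfolding ext_def by simp
  next
    case False
    then have rGN: "rG > pole \<alpha> s N" by simp
    have lpH: "\<forall>j<length ext. rG > pole \<alpha> s (ext ! j)"
    proof (intro allI impI)
      fix j assume "j < length ext"
      then have "pole \<alpha> s (ext ! j) \<le> pole \<alpha> s N" using extle unfolding pole_def by simp
      then show "rG > pole \<alpha> s (ext ! j)" using rGN by simp
    qed
    define c where "c = rG + 1 - \<alpha> * real s"
    define h where "h = (\<lambda>m. real m / (rG - pole \<alpha> s m))"
    define g0 where "g0 = real p / (c - real p)"
    have hphi: "h m = phi c (real p) (real m - real p) + g0" for m
      unfolding h_def phi_def g0_def c_def pole_def by (simp add: algebra_simps)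
    have cN: "c > real N" using rGN unfolding c_def pole_def by simp
    have ex: "\<exists>x\<in>set rest. x > p"
    proof (rule ccontr)
      assume "\<not> ?thesis"
      then have "\<forall>x\<in>set rest. x = p" using restp by force
      then have "rest = replicate (t - 1) p" using lr by (simp add: replicate_eqI)
      then have "sum_list rest = (t - 1) * p" by (simp add: sum_list_replicate)
      then have "N = n1" using Nd by simp
      then have "ns = ext" unfolding ext_def nsd using \<open>rest = replicate (t - 1) p\<close> by simp
      then show False using neq by simp
    qed
    then obtain x where x: "x \<in> set rest" "x > p" by blast
    have n1gt: "n1 > p" using x n1ge by force
    define us where "us = map (\<lambda>m. real m - real p) rest"
    have us0: "\<forall>y\<in>set us. y \<ge> 0" unfolding us_def using restp by auto
    have usx: "real x - real p \<in> set us" unfolding us_def using x by auto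
    have sus: "sum_list us > 0"
    proof -
      have "real x - real p \<le> sum_list us" using member_le_sum_list[OF usx] us0 by auto
      then show ?thesis using x by simp
    qed
    have susv: "sum_list us = real (sum_list rest) - real (t - 1) * real p"
      unfolding us_def sum_sub lr ..
    have NA: "real N - real p = (real n1 - real p) + sum_list us" using NrealR susv by simp
    have strict: "phi c (real p) (real n1 - real p) + sum_list (map (phi c (real p)) us)
        < phi c (real p) ((real n1 - real p) + sum_list us)"
      using us0 cN NA n1gt sus by (intro phi_list_strict) auto
    have SG: "sum_list (map h ns) = phi c (real p) (real n1 - real p) + sum_list (map (phi c (real p)) us) + real t * g0"
      using sum_shift[of ns h c "real p" g0] hphi len unfolding nsd us_def by simp
    have phi0: "phi c (real p) 0 = 0" unfolding phi_def by simp
    have SH: "sum_list (map h ext) = phi c (real p) (real N - real p) + real t * g0"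
      using sum_shift[of ext h c "real p" g0] hphi lenext unfolding ext_def
      by (simp add: phi0 comp_def sum_list_replicate)
    have lt: "sum_list (map h ns) < sum_list (map h ext)"
      unfolding SG SH NA using strict by simp
    have cpos: "real s * (1 - \<alpha>)^2 > 0" using s1 a1 by simp
    have "FF \<alpha> s ext rG < FF \<alpha> s ns rG"
      unfolding FF_sum sumext h_def[symmetric] using mult_strict_left_mono[OF lt cpos] by simp
    then have Fneg: "FF \<alpha> s ext rG < 0" using rG0 by simp
    show ?thesis
    proof (rule ccontr)
      assume "\<not> rG < rH"
      then consider "rG = rH" | "rH < rG" by linarith
      then show False
      proof cases
        case 1 then show False using Fneg rH0 by simp
      next
        case 2
        have "FF \<alpha> s ext rH < FF \<alpha> s ext rG" by (rule FF_mono[OF rHp 2])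
        then show False using Fneg rH0 by simp
      qed
    qed
  qed
  show ?thesis
  proof (cases "ns = ext")
    case True
    then show ?thesis unfolding ext_def N_def by simp
  next
    case False
    have "rG < rH" by (rule key[OF False])
    then show ?thesis using False rhoG rhoH unfolding ext_def N_def by simp
  qed
qed


end
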